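(* Let $r\in(0,1)$ and let $k\geq 1$ be an integer. Let $W_1,W_2,\dots$ be i.i.d.\ copies of a positive random variable $W$ with $\mathbb{E}[W]=1$ (an i.i.d.\ multiplicative cascade with scale ratio $r$), with scaling exponents $\zeta_p$ defined by $\mathbb{E}[W^p]=r^{\zeta_p}$ (so $\zeta_0=0$) and incremental exponents $\delta_p=\zeta_{p+k}-\zeta_p$. Suppose the hierarchical symmetry axiom A1 holds: there exists $\beta\in(0,1)$ such that $\delta_\infty=\lim_{p\to\infty}\delta_p$ exists and is finite and $$\delta_{p+k}=(1-\beta)\delta_\infty+\beta\,\delta_p\qquad\text{for all }p\in k\mathbb{N}_0=\{0,k,2k,\dots\}.$$ Set $\gamma=\delta_\infty/k$ and $C=(\delta_0-\delta_\infty)/(1-\beta)$. Then: (i) $\zeta_p=\gamma p+C\bigl(1-\beta^{p/k}\bigr)$. (ii) $W$ is uniquely determined to be log-Poisson: $\log W=a+bN$ with $N\sim\mathrm{Poisson}(\lambda)$, where $a=\gamma\ln r$, $b=(\ln\beta)/k$, $\lambda=-C\ln r$. No other probability distribution on $W$ is compatible with A1. (iii) Let $d$ be the spatial dimension of the cascade support and let $f(h)=\inf_{p}\,[ph-\zeta_p+d]$ be the singularity spectrum. Then $$f(h)=d-C+Cx(1-\ln x),\qquad x=\frac{k(h-\gamma)}{C|\ln\beta|},$$ for $h\in[\gamma,\ \gamma+(C/k)|\ln\beta|]$.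
   Context: $\log$ and $\ln$ denote the natural logarithm. The scaling exponents are equivalently the exponents of the structure functions $S_p(\ell)=\langle|\Phi(\ell)|^p\rangle=\ell^{\zeta_p}$ of the cascade observable at scales $\ell=r^n$. *)

theory Defs
  imports "HOL-Probability.Probability"
begin

definition zeta :: "'a measure \<Rightarrow> ('a \<Rightarrow> real) \<Rightarrow> real \<Rightarrow> real \<Rightarrow> real" where
  "zeta M W r p = ln (integral\<^sup>L M (\<lambda>\<omega>. W \<omega> powr p)) / ln r"

definition delta :: "'a measure \<Rightarrow> ('a \<Rightarrow> real) \<Rightarrow> real \<Rightarrow> nat \<Rightarrow> real \<Rightarrow> real" where
  "delta M W r k p = zeta M W r (p + real k) - zeta M W r p"

text \<open>Poisson distribution with parameter lam >= 0 on the naturals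
  (for lam = 0 this is the point mass at 0, since 0^0 = 1).\<close>
definition poisson_measure :: "real \<Rightarrow> nat measure" where
  "poisson_measure lam =
     density (count_space UNIV) (\<lambda>n. ennreal (lam ^ n / fact n * exp (- lam)))"

definition sing_spectrum ::
  "'a measure \<Rightarrow> ('a \<Rightarrow> real) \<Rightarrow> real \<Rightarrow> nat \<Rightarrow> real \<Rightarrow> real" where
  "sing_spectrum M W r d h = (INF p\<in>{0::real..}. p * h - zeta M W r p + real d)"

end

theory Submission
  imports Defs "HOL-Probability.Levy"
begin

lemma poisson_gf:
  fixes lam q :: real
  assumes lam: "0 \<le> lam"
  shows "integrable (poisson_measure lam) (\<lambda>n. q ^ n)"
    and "integral\<^sup>L (poisson_measure lam) (\<lambda>n. q ^ n) = exp (lam * (q - 1))"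
proof -
  define g where "g n = lam ^ n / fact n * exp (- lam)" for n :: nat
  have gnn: "0 \<le> g n" for n unfolding g_def using lam by simp
  have pm: "poisson_measure lam = density (count_space UNIV) g"
    unfolding poisson_measure_def g_def by simp
  have s1: "(\<lambda>n. g n * q ^ n) sums (exp (lam * q) * exp (- lam))"
  proof -
    have "(\<lambda>n. (lam * q) ^ n / fact n) sums exp (lam * q)"
      using exp_converges[of "lam * q"] by (simp add: divide_inverse mult.commute)
    then have "(\<lambda>n. (lam * q) ^ n / fact n * exp (- lam)) sums (exp (lam * q) * exp (- lam))"
      by (rule sums_mult2)
    then show ?thesis unfolding g_def by (simp add: power_mult_distrib mult_ac)
  qed
  have s2: "summable (\<lambda>n. norm (g n * q ^ n))"
  proof -
    have "(\<lambda>n. (lam * \<bar>q\<bar>) ^ n / fact n) sums exp (lam * \<bar>q\<bar>)"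
      using exp_converges[of "lam * \<bar>q\<bar>"] by (simp add: divide_inverse mult.commute)
    then have "(\<lambda>n. (lam * \<bar>q\<bar>) ^ n / fact n * exp (- lam)) sums (exp (lam * \<bar>q\<bar>) * exp (- lam))"
      by (rule sums_mult2)
    then have "summable (\<lambda>n. (lam * \<bar>q\<bar>) ^ n / fact n * exp (- lam))" by (rule sums_summable)
    moreover have "norm (g n * q ^ n) = (lam * \<bar>q\<bar>) ^ n / fact n * exp (- lam)" for n
      unfolding g_def using lam by (simp add: abs_mult power_abs power_mult_distrib)
    ultimately show ?thesis by simp
  qed
  have ic: "integrable (count_space UNIV) (\<lambda>n. g n * q ^ n)"
    using s2 by (simp add: integrable_count_space_nat_iff)
  show "integrable (poisson_measure lam) (\<lambda>n. q ^ n)"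
    unfolding pm using ic gnn by (subst integrable_density) auto
  have "integral\<^sup>L (poisson_measure lam) (\<lambda>n. q ^ n) = integral\<^sup>L (count_space UNIV) (\<lambda>n. g n * q ^ n)"
    unfolding pm using gnn by (subst integral_density) auto
  also have "\<dots> = exp (lam * q) * exp (- lam)"
    using sums_unique[OF s1] integral_count_space_nat[OF ic] by simp
  also have "\<dots> = exp (lam * (q - 1))" by (simp add: mult_exp_exp algebra_simps)
  finally show "integral\<^sup>L (poisson_measure lam) (\<lambda>n. q ^ n) = exp (lam * (q - 1))" .
qed

lemma poisson_prob:
  assumes lam: "0 \<le> (lam::real)"
  shows "prob_space (poisson_measure lam)"
proof
  have nn: "AE n in poisson_measure lam. 0 \<le> (1::real)" by simp
  have "emeasure (poisson_measure lam) (space (poisson_measure lam))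
      = (\<integral>\<^sup>+ n. ennreal ((1::real) ^ n) \<partial>poisson_measure lam)"
    by (simp add: nn_integral_const)
  also have "\<dots> = ennreal (integral\<^sup>L (poisson_measure lam) (\<lambda>n. (1::real) ^ n))"
    using poisson_gf[OF lam, of 1] by (intro nn_integral_eq_integral) auto
  also have "\<dots> = 1" using poisson_gf(2)[OF lam, of 1] by simp
  finally show "emeasure (poisson_measure lam) (space (poisson_measure lam)) = 1" .
qed

lemma moments_det:
  fixes M1 M2 :: "real measure"
  assumes d1: "real_distribution M1" and d2: "real_distribution M2"
    and p1: "AE x in M1. 0 \<le> x" and p2: "AE x in M2. 0 \<le> x"
    and i1: "\<And>n. integrable M1 (\<lambda>x. x ^ n)" and i2: "\<And>n. integrable M2 (\<lambda>x. x ^ n)"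
    and eq: "\<And>n. integral\<^sup>L M1 (\<lambda>x. x ^ n) = integral\<^sup>L M2 (\<lambda>x. x ^ n)"
    and le: "\<And>n. integral\<^sup>L M1 (\<lambda>x. x ^ n) \<le> 1"
  shows "M1 = M2"
proof (rule Levy_uniqueness[OF d1 d2], rule ext)
  fix t :: real
  interpret A: real_distribution M1 by (rule d1)
  interpret B: real_distribution M2 by (rule d2)
  define S where "S n = (\<Sum>k \<le> n. ((\<i> * t)^k / fact k) * complex_of_real (integral\<^sup>L M1 (\<lambda>x. x^k)))" for n
  have absA: "integral\<^sup>L M1 (\<lambda>x. \<bar>x\<bar> ^ n) = integral\<^sup>L M1 (\<lambda>x. x ^ n)" for n
    by (rule integral_cong_AE) (use p1 in auto)
  have absB: "integral\<^sup>L M2 (\<lambda>x. \<bar>x\<bar> ^ n) = integral\<^sup>L M2 (\<lambda>x. x ^ n)" for n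
    by (rule integral_cong_AE) (use p2 in auto)
  have bd: "cmod (char M1 t - char M2 t) \<le> 4 * (\<bar>t\<bar> ^ n / fact n)" for n
  proof -
    have a: "cmod (char M1 t - S n) \<le> (2*\<bar>t\<bar>^n / fact n) * integral\<^sup>L M1 (\<lambda>x. \<bar>x\<bar>^n)"
      unfolding S_def by (rule A.char_approx1) (rule i1)
    have b: "cmod (char M2 t - S n) \<le> (2*\<bar>t\<bar>^n / fact n) * integral\<^sup>L M2 (\<lambda>x. \<bar>x\<bar>^n)"
      unfolding S_def eq by (rule B.char_approx1) (rule i2)
    have c: "(2*\<bar>t\<bar>^n / fact n) * integral\<^sup>L M1 (\<lambda>x. \<bar>x\<bar>^n) \<le> 2*\<bar>t\<bar>^n / fact n"
      unfolding absA using le[of n] by (intro mult_left_le) auto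
    have d: "(2*\<bar>t\<bar>^n / fact n) * integral\<^sup>L M2 (\<lambda>x. \<bar>x\<bar>^n) \<le> 2*\<bar>t\<bar>^n / fact n"
      unfolding absB eq[symmetric] using le[of n] by (intro mult_left_le) auto
    have "cmod (char M1 t - char M2 t) \<le> cmod (char M1 t - S n) + cmod (char M2 t - S n)"
      by (metis norm_triangle_ineq4 diff_diff_eq2 norm_minus_commute add.commute diff_add_cancel
          norm_triangle_sub)
    then show ?thesis using a b c d by simp
  qed
  have lim: "(\<lambda>n. 4 * (\<bar>t\<bar> ^ n / fact n)) \<longlonglongrightarrow> 0"
  proof -
    have "summable (\<lambda>n. \<bar>t\<bar> ^ n / fact n)"
      using exp_converges[of "\<bar>t\<bar>"] by (simp add: sums_iff divide_inverse mult.commute)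
    then have "(\<lambda>n. \<bar>t\<bar> ^ n / fact n) \<longlonglongrightarrow> 0" by (rule summable_LIMSEQ_zero)
    then show ?thesis using tendsto_mult_right_zero by blast
  qed
  have "cmod (char M1 t - char M2 t) \<le> 0"
    by (rule tendsto_le[OF trivial_limit_sequentially lim tendsto_const]) (use bd in auto)
  then show "char M1 t = char M2 t" by simp
qed

lemma spectrum_calc:
  fixes \<gamma> C h \<beta> :: real and k d :: nat
  assumes k: "k \<ge> 1" and b0: "0 < \<beta>" and b1: "\<beta> < 1" and C0: "0 \<le> C"
    and h: "h \<in> {\<gamma> .. \<gamma> + (C / real k) * \<bar>ln \<beta>\<bar>}"
  defines "x \<equiv> real k * (h - \<gamma>) / (C * \<bar>ln \<beta>\<bar>)"
  shows "(INF p\<in>{0::real..}. p * h - (\<gamma> * p + C * (1 - \<beta> powr (p / real k))) + real d)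
         = real d - C + C * x * (1 - ln x)"
proof -
  define s where "s = ln \<beta> / real k"
  define g where "g p = p * h - (\<gamma> * p + C * (1 - \<beta> powr (p / real k))) + real d" for p
  have kpos: "0 < real k" using k by simp
  have lnb: "ln \<beta> < 0" using b0 b1 by simp
  have s0: "s < 0" unfolding s_def using lnb kpos by (simp add: divide_neg_pos)
  have gE: "g p = p * (h - \<gamma>) - C + C * exp (s * p) + real d" for p
    unfolding g_def s_def powr_def using b0 by (simp add: algebra_simps)
  show ?thesis
  proof (cases "h = \<gamma>")
    case True
    then have x0: "x = 0" unfolding x_def by simp
    have lb: "real d - C \<le> g p" for p unfolding gE True using C0 by simp
    have "(\<lambda>n. g (real n)) \<longlonglongrightarrow> real d - C + C * 0"
    proof -
      have e: "exp (s * real n) = exp s ^ n" for n by (simp add: exp_of_nat_mult[symmetric] mult.commute)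
      have "(\<lambda>n. exp s ^ n) \<longlonglongrightarrow> 0" by (rule LIMSEQ_power_zero) (use s0 in simp)
      then have "(\<lambda>n. real d - C + C * exp s ^ n) \<longlonglongrightarrow> real d - C + C * 0"
        by (intro tendsto_add tendsto_const tendsto_mult)
      then show ?thesis unfolding gE True e by (simp add: algebra_simps)
    qed
    moreover have "(INF p\<in>{0::real..}. g p) \<le> g (real n)" for n
      by (rule cINF_lower) (use lb in \<open>auto intro!: bdd_belowI[where m="real d - C"]\<close>)
    ultimately have u: "(INF p\<in>{0::real..}. g p) \<le> real d - C"
      using LIMSEQ_le_const by fastforce
    have l: "real d - C \<le> (INF p\<in>{0::real..}. g p)"
      by (rule cINF_greatest) (use lb in auto)
    show ?thesis using u l x0 unfolding g_def by simp
  next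
    case False
    then have hg: "h > \<gamma>" using h by simp
    then have Cpos: "C > 0" using h lnb kpos C0 by (cases "C = 0") auto
    have key: "h - \<gamma> = - x * C * s"
      unfolding x_def s_def using Cpos lnb kpos by (simp add: field_simps)
    have xpos: "x > 0" unfolding x_def using hg Cpos lnb kpos by (intro divide_pos_pos) (auto simp: mult_pos_neg)
    have x1: "x \<le> 1"
    proof -
      have "real k * (h - \<gamma>) \<le> C * \<bar>ln \<beta>\<bar>" using h kpos by (simp add: field_simps)
      moreover have "0 < C * \<bar>ln \<beta>\<bar>" using Cpos lnb by (simp add: mult_pos_neg)
      ultimately show ?thesis unfolding x_def by (subst pos_divide_le_eq) auto
    qed
    define p0 where "p0 = ln x / s"
    have p0: "0 \<le> p0" unfolding p0_def using s0 xpos x1 by (simp add: divide_nonpos_neg)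
    have ep0: "exp (s * p0) = x" unfolding p0_def using s0 xpos by simp
    have gp0: "g p0 = real d - C + C * x * (1 - ln x)"
    proof -
      have "p0 * (h - \<gamma>) = - C * x * ln x" unfolding key p0_def using s0 by (simp add: field_simps)
      then show ?thesis unfolding gE ep0 by (simp add: algebra_simps)
    qed
    have lb: "g p0 \<le> g p" for p
    proof -
      have "exp (s * p) \<ge> exp (s * p0) * (1 + s * (p - p0))"
      proof -
        have "exp (s * p) = exp (s * p0) * exp (s * (p - p0))" by (simp add: right_diff_distrib exp_diff)
        moreover have "1 + s * (p - p0) \<le> exp (s * (p - p0))" by (rule exp_ge_add_one_self)
        ultimately show ?thesis by simp
      qed
      then have "C * exp (s * p) \<ge> C * (x * (1 + s * (p - p0)))" using Cpos ep0 by (simp add: mult_left_mono)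
      then show ?thesis using ep0 unfolding gE key by (simp add: algebra_simps)
    qed
    have "(INF p\<in>{0::real..}. g p) = g p0"
      by (rule cInf_eq_minimum) (use p0 lb in auto)
    then show ?thesis using gp0 unfolding g_def by simp
  qed
qed

theorem mainTheorem1:
  fixes M :: "'a measure" and W :: "'a \<Rightarrow> real"
    and r \<beta> \<delta>inf :: real and k d :: nat
  assumes "prob_space M"
    and "0 < r" and "r < 1"
    and "k \<ge> 1"
    and "W \<in> borel_measurable M"
    and "\<forall>\<omega>\<in>space M. 0 < W \<omega>"
    and "integrable M W" and "integral\<^sup>L M W = 1"
    and "\<forall>j::nat. integrable M (\<lambda>\<omega>. W \<omega> ^ (j * k))"
    and "0 < \<beta>" and "\<beta> < 1"
    and "(\<lambda>j::nat. delta M W r k (real (j * k))) \<longlonglongrightarrow> \<delta>inf"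
    and "\<forall>j::nat. delta M W r k (real (j * k) + real k)
                  = (1 - \<beta>) * \<delta>inf + \<beta> * delta M W r k (real (j * k))"
  shows "let \<gamma> = \<delta>inf / real k;
             C = (delta M W r k 0 - \<delta>inf) / (1 - \<beta>);
             a = \<gamma> * ln r; b = ln \<beta> / real k; lam = - C * ln r
         in (\<forall>p::real. p \<ge> 0 \<longrightarrow> zeta M W r p = \<gamma> * p + C * (1 - \<beta> powr (p / real k)))
          \<and> lam \<ge> 0
          \<and> distr M borel (\<lambda>\<omega>. ln (W \<omega>))
              = distr (poisson_measure lam) borel (\<lambda>n. a + b * real n)
          \<and> (\<forall>h\<in>{\<gamma> .. \<gamma> + (C / real k) * \<bar>ln \<beta>\<bar>}.
               let x = real k * (h - \<gamma>) / (C * \<bar>ln \<beta>\<bar>)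
               in sing_spectrum M W r d h = real d - C + C * x * (1 - ln x))"
proof -
  note ps = assms(1) and r0 = assms(2) and r1 = assms(3) and k1 = assms(4)
    and Wm = assms(5) and Wpos = assms(6) and intk = assms(9) and b0 = assms(10) and b1 = assms(11)
    and rec = assms(13)
  interpret P: prob_space M by (rule ps)
  define \<gamma> where "\<gamma> = \<delta>inf / real k"
  define D0 where "D0 = delta M W r k 0"
  define C where "C = (D0 - \<delta>inf) / (1 - \<beta>)"
  define a where "a = \<gamma> * ln r"
  define b where "b = ln \<beta> / real k"
  define lam where "lam = - C * ln r"
  define c where "c = exp (real k * a)"
  define I where "I j = integral\<^sup>L M (\<lambda>\<omega>. W \<omega> ^ (j * k))" for j
  have kpos: "0 < real k" using k1 by simp
  have lnr: "ln r < 0" using r0 r1 by simp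
  have c0: "0 < c" unfolding c_def by simp
  have DA: "delta M W r k (real (j * k)) = \<delta>inf + \<beta> ^ j * (D0 - \<delta>inf)" for j
  proof (induction j)
    case 0 then show ?case unfolding D0_def by simp
  next
    case (Suc j)
    have "real (Suc j * k) = real (j * k) + real k" by simp
    then have "delta M W r k (real (Suc j * k)) = (1 - \<beta>) * \<delta>inf + \<beta> * delta M W r k (real (j * k))"
      using rec by metis
    then show ?case unfolding Suc.IH by (simp add: algebra_simps)
  qed
  have Z0: "zeta M W r 0 = 0"
  proof -
    have "integral\<^sup>L M (\<lambda>\<omega>. W \<omega> powr 0) = integral\<^sup>L M (\<lambda>\<omega>. 1)"
      by (rule Bochner_Integration.integral_cong[OF refl]) (use Wpos in auto)
    then show ?thesis unfolding zeta_def by (simp add: P.prob_space)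
  qed
  have ZB: "zeta M W r (real (j * k)) = real j * \<delta>inf + C * (1 - \<beta> ^ j)" for j
  proof (induction j)
    case 0 then show ?case using Z0 by simp
  next
    case (Suc j)
    have "zeta M W r (real (Suc j * k)) = zeta M W r (real (j * k)) + delta M W r k (real (j * k))"
      unfolding delta_def by (simp add: add.commute)
    also have "\<dots> = real j * \<delta>inf + C * (1 - \<beta> ^ j) + (\<delta>inf + \<beta> ^ j * (D0 - \<delta>inf))"
      using Suc DA by simp
    also have "\<dots> = real (Suc j) * \<delta>inf + C * (1 - \<beta> ^ Suc j)"
      unfolding C_def using b1 by (simp add: field_simps)
    finally show ?case .
  qed
  have Ipos: "0 < I j" for j
  proof -
    have nn: "0 \<le> I j" unfolding I_def using Wpos by (intro integral_nonneg_AE AE_I2) (auto intro: less_imp_le)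
    moreover have "I j \<noteq> 0"
    proof
      assume "I j = 0"
      then have "AE \<omega> in M. W \<omega> ^ (j * k) = 0"
        unfolding I_def using Wpos intk by (subst integral_nonneg_eq_0_iff_AE[symmetric]) (auto intro!: AE_I2 less_imp_le)
      moreover have "AE \<omega> in M. W \<omega> ^ (j * k) \<noteq> 0" using Wpos by (intro AE_I2) (metis less_irrefl power_not_zero)
      ultimately have "AE \<omega> in M. False" by eventually_elim simp
      then show False by simp
    qed
    ultimately show ?thesis by simp
  qed
  have IC: "I j = c ^ j * exp (lam * (\<beta> ^ j - 1))" for j
  proof -
    have "integral\<^sup>L M (\<lambda>\<omega>. W \<omega> powr real (j * k)) = I j"
      unfolding I_def by (rule Bochner_Integration.integral_cong[OF refl], rule powr_realpow) (use Wpos in auto)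
    then have "zeta M W r (real (j * k)) * ln r = ln (I j)"
      unfolding zeta_def using lnr by simp
    then have "ln (I j) = real j * (real k * a) + lam * (\<beta> ^ j - 1)"
      unfolding ZB a_def lam_def \<gamma>_def using kpos by (simp add: field_simps)
    then have "I j = exp (real j * (real k * a) + lam * (\<beta> ^ j - 1))"
      using Ipos[of j] by (metis exp_ln)
    then show ?thesis unfolding c_def by (simp add: exp_add exp_of_nat_mult)
  qed
  have lam0: "0 \<le> lam"
  proof -
    let ?V = "\<lambda>\<omega>. W \<omega> ^ k"
    have iV: "integrable M ?V" using intk[rule_format, of 1] by simp
    have iV2: "integrable M (\<lambda>\<omega>. (?V \<omega>)\<^sup>2)" using intk[rule_format, of 2]
      by (simp add: power_mult[symmetric] mult.commute)
    have "0 \<le> P.variance ?V" by (rule P.variance_positive)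
    also have "\<dots> = I 2 - (I 1)\<^sup>2"
      unfolding P.variance_eq[OF iV iV2] I_def by (simp add: power_mult[symmetric] mult.commute)
    finally have "(I 1)\<^sup>2 \<le> I 2" by simp
    then have "(c * exp (lam * (\<beta> - 1)))\<^sup>2 \<le> c\<^sup>2 * exp (lam * (\<beta>\<^sup>2 - 1))"
      unfolding IC by simp
    then have "c\<^sup>2 * exp (2 * (lam * (\<beta> - 1))) \<le> c\<^sup>2 * exp (lam * (\<beta>\<^sup>2 - 1))"
      using exp_add[of "lam * (\<beta> - 1)" "lam * (\<beta> - 1)"] by (simp add: power2_eq_square mult_2 mult_ac)
    then have "exp (2 * (lam * (\<beta> - 1))) \<le> exp (lam * (\<beta>\<^sup>2 - 1))"
      using c0 by simp
    then have "2 * (lam * (\<beta> - 1)) \<le> lam * (\<beta>\<^sup>2 - 1)" by simp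
    then have "0 \<le> lam * (\<beta> - 1)\<^sup>2" by (simp add: power2_eq_square algebra_simps)
    moreover have "0 < (\<beta> - 1)\<^sup>2" using b1 by simp
    ultimately show ?thesis by (simp add: zero_le_mult_iff)
  qed
  have C0: "0 \<le> C"
  proof -
    have "C = lam / (- ln r)" unfolding lam_def using lnr by simp
    then show ?thesis using lam0 lnr by (simp add: divide_nonneg_neg)
  qed
  define U where "U \<omega> = W \<omega> ^ k / c" for \<omega>
  have Um[measurable]: "U \<in> borel_measurable M" unfolding U_def using Wm by measurable
  have Upow: "U \<omega> ^ n = W \<omega> ^ (n * k) / c ^ n" for \<omega> n
    unfolding U_def by (simp add: power_divide power_mult[symmetric] mult.commute)
  have Uint: "integrable M (\<lambda>\<omega>. U \<omega> ^ n)" for n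
    unfolding Upow using intk by simp
  have Umom: "integral\<^sup>L M (\<lambda>\<omega>. U \<omega> ^ n) = exp (lam * (\<beta> ^ n - 1))" for n
    unfolding Upow using IC[of n] c0 by (simp add: I_def)
  define M1 where "M1 = distr M borel U"
  define Q where "Q = poisson_measure lam"
  interpret Q: prob_space Q unfolding Q_def by (rule poisson_prob[OF lam0])
  have sQ: "sets Q = sets (count_space UNIV)" unfolding Q_def poisson_measure_def by simp
  have mQ: "f \<in> measurable Q N" if "range f \<subseteq> space N" for f :: "nat \<Rightarrow> 'b" and N
    using that by (subst measurable_cong_sets[OF sQ refl]) auto
  define M2 where "M2 = distr Q borel (\<lambda>n. \<beta> ^ n)"
  have bm: "(\<lambda>n. \<beta> ^ n) \<in> measurable Q borel" by (rule mQ) simp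
  have M12: "M1 = M2"
  proof (rule moments_det)
    show "real_distribution M1" unfolding M1_def by (rule P.real_distribution_distr) simp
    show "real_distribution M2" unfolding M2_def by (rule Q.real_distribution_distr) (rule bm)
    show "AE x in M1. 0 \<le> x" unfolding M1_def
      by (subst AE_distr_iff) (use Wpos c0 in \<open>auto simp: U_def intro!: AE_I2\<close>)
    show "AE x in M2. 0 \<le> x" unfolding M2_def
      by (subst AE_distr_iff[OF bm]) (use b0 in auto)
    show "integrable M1 (\<lambda>x. x ^ n)" for n unfolding M1_def
      by (subst integrable_distr_eq) (auto intro: Uint)
    have q: "integrable Q (\<lambda>m. (\<beta> ^ n) ^ m) \<and> integral\<^sup>L Q (\<lambda>m. (\<beta> ^ n) ^ m) = exp (lam * (\<beta> ^ n - 1))" for n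
      unfolding Q_def using poisson_gf[OF lam0] by simp
    show "integrable M2 (\<lambda>x. x ^ n)" for n unfolding M2_def
      by (subst integrable_distr_eq[OF bm]) (use q[of n] in \<open>auto simp: power_mult[symmetric] mult.commute\<close>)
    show "integral\<^sup>L M1 (\<lambda>x. x ^ n) = integral\<^sup>L M2 (\<lambda>x. x ^ n)" for n
    proof -
      have e1: "integral\<^sup>L M1 (\<lambda>x. x ^ n) = integral\<^sup>L M (\<lambda>\<omega>. U \<omega> ^ n)"
        unfolding M1_def by (rule integral_distr) auto
      have e2: "integral\<^sup>L M2 (\<lambda>x. x ^ n) = integral\<^sup>L Q (\<lambda>m. (\<beta> ^ m) ^ n)"
        unfolding M2_def by (rule integral_distr[OF bm]) simp
      have e3: "(\<lambda>m. (\<beta> ^ m) ^ n) = (\<lambda>m. (\<beta> ^ n) ^ m)"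
        by (simp add: power_mult[symmetric] mult.commute)
      show ?thesis unfolding e1 e2 e3 Umom using q[of n] by simp
    qed
    show "integral\<^sup>L M1 (\<lambda>x. x ^ n) \<le> 1" for n
    proof -
      have "\<beta> ^ n \<le> 1" using b0 b1 by (simp add: power_le_one)
      then have "lam * (\<beta> ^ n - 1) \<le> 0" using lam0 by (simp add: mult_nonneg_nonpos)
      then show ?thesis unfolding M1_def by (subst integral_distr) (auto simp: Umom)
    qed
  qed
  define g where "g u = a + ln u / real k" for u :: real
  have gm: "g \<in> borel_measurable borel" unfolding g_def by measurable
  have lnW: "distr M borel (\<lambda>\<omega>. ln (W \<omega>)) = distr Q borel (\<lambda>n. a + b * real n)"
  proof -
    have "distr M borel (\<lambda>\<omega>. ln (W \<omega>)) = distr M borel (g \<circ> U)"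
    proof (rule distr_cong[OF refl refl])
      fix \<omega> assume "\<omega> \<in> space M"
      then have w: "0 < W \<omega>" using Wpos by simp
      have "ln (U \<omega>) = real k * ln (W \<omega>) - real k * a"
        unfolding U_def c_def using w by (simp add: ln_div ln_realpow)
      then show "ln (W \<omega>) = (g \<circ> U) \<omega>" unfolding g_def using kpos by (simp add: field_simps)
    qed
    also have "\<dots> = distr M1 borel g" unfolding M1_def by (rule distr_distr[symmetric, OF gm]) simp
    also have "\<dots> = distr M2 borel g" by (simp add: M12)
    also have "\<dots> = distr Q borel (g \<circ> (\<lambda>n. \<beta> ^ n))" unfolding M2_def by (rule distr_distr[OF gm bm])
    also have "\<dots> = distr Q borel (\<lambda>n. a + b * real n)"
      by (rule distr_cong[OF refl refl]) (use b0 in \<open>simp add: g_def b_def ln_realpow\<close>)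
    finally show ?thesis .
  qed
  have zeta_all: "zeta M W r p = \<gamma> * p + C * (1 - \<beta> powr (p / real k))" for p
  proof -
    have am: "(\<lambda>n. a + b * real n) \<in> measurable Q borel" by (rule mQ) simp
    have lm: "(\<lambda>\<omega>. ln (W \<omega>)) \<in> borel_measurable M" using Wm by measurable
    have "integral\<^sup>L M (\<lambda>\<omega>. W \<omega> powr p) = integral\<^sup>L M (\<lambda>\<omega>. exp (p * ln (W \<omega>)))"
      by (rule Bochner_Integration.integral_cong[OF refl]) (use Wpos in \<open>auto simp: powr_def mult.commute\<close>)
    also have "\<dots> = integral\<^sup>L (distr M borel (\<lambda>\<omega>. ln (W \<omega>))) (\<lambda>x. exp (p * x))"
      by (rule integral_distr[symmetric, OF lm]) simp
    also have "\<dots> = integral\<^sup>L Q (\<lambda>n. exp (p * (a + b * real n)))"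
      unfolding lnW by (rule integral_distr[OF am]) simp
    also have "\<dots> = integral\<^sup>L Q (\<lambda>n. exp (p * a) * exp (p * b) ^ n)"
      by (rule Bochner_Integration.integral_cong[OF refl])
         (simp add: distrib_left exp_add exp_of_nat_mult[symmetric] mult_ac)
    also have "\<dots> = exp (p * a) * exp (lam * (exp (p * b) - 1))"
      using poisson_gf(2)[OF lam0, of "exp (p * b)"] unfolding Q_def by simp
    finally have E: "integral\<^sup>L M (\<lambda>\<omega>. W \<omega> powr p) = exp (p * a + lam * (exp (p * b) - 1))"
      by (simp add: exp_add)
    have pb: "exp (p * b) = \<beta> powr (p / real k)" unfolding b_def powr_def using b0 by simp
    show ?thesis unfolding zeta_def E ln_exp pb a_def lam_def using lnr by (simp add: field_simps)
  qed
  have spec: "\<forall>h\<in>{\<gamma> .. \<gamma> + (C / real k) * \<bar>ln \<beta>\<bar>}.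
               let x = real k * (h - \<gamma>) / (C * \<bar>ln \<beta>\<bar>)
               in sing_spectrum M W r d h = real d - C + C * x * (1 - ln x)"
  proof
    fix h assume h: "h \<in> {\<gamma> .. \<gamma> + (C / real k) * \<bar>ln \<beta>\<bar>}"
    have "sing_spectrum M W r d h
        = (INF p\<in>{0::real..}. p * h - (\<gamma> * p + C * (1 - \<beta> powr (p / real k))) + real d)"
      unfolding sing_spectrum_def by (rule INF_cong[OF refl]) (simp add: zeta_all)
    then show "let x = real k * (h - \<gamma>) / (C * \<bar>ln \<beta>\<bar>)
               in sing_spectrum M W r d h = real d - C + C * x * (1 - ln x)"
      unfolding Let_def using spectrum_calc[OF k1 b0 b1 C0 h] by simp
  qed
  have main: "(\<forall>p::real. p \<ge> 0 \<longrightarrow> zeta M W r p = \<gamma> * p + C * (1 - \<beta> powr (p / real k)))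
          \<and> lam \<ge> 0
          \<and> distr M borel (\<lambda>\<omega>. ln (W \<omega>))
              = distr (poisson_measure lam) borel (\<lambda>n. a + b * real n)
          \<and> (\<forall>h\<in>{\<gamma> .. \<gamma> + (C / real k) * \<bar>ln \<beta>\<bar>}.
               let x = real k * (h - \<gamma>) / (C * \<bar>ln \<beta>\<bar>)
               in sing_spectrum M W r d h = real d - C + C * x * (1 - ln x))"
    using zeta_all lam0 lnW spec unfolding Q_def by blast
  show ?thesis using main unfolding Let_def \<gamma>_def C_def D0_def a_def b_def lam_def .
qed

end
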